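(* Let $n\ge0$ and $k\ge1$ be integers, $\rho\ne0$ real, $0\le q<1$, and $x,y$ complex numbers. Then $$B_{n,\rho,q}^{(k)}(x)=\sum_{l=0}^{n}\sum_{m=0}^{n}(-1)^{n-m}m!\,\rho^{n-l}S_2\!\left(n,m,\tfrac{x}{\rho}\right)S_2\!\left(m,l,\tfrac{y}{\rho}\right)c_{l,\rho,q}^{(k)}(y),$$ $$B_{n,\rho,q}^{(k)}(x)=\sum_{l=0}^{n}\sum_{m=0}^{n}(-1)^{n}m!\,\rho^{n-l}S_2\!\left(n,m,\tfrac{x}{\rho}\right)S_2\!\left(m,l,-\tfrac{y}{\rho}\right)\widehat c_{l,\rho,q}^{(k)}(y),$$ $$c_{n,\rho,q}^{(k)}(x)=\sum_{l=0}^{n}\sum_{m=0}^{n}\frac{(-1)^{n-m}}{m!}\rho^{n-l}S_1\!\left(n,m,\tfrac{x}{\rho}\right)S_1\!\left(m,l,\tfrac{y}{\rho}\right)B_{l,\rho,q}^{(k)}(y),$$ $$\widehat c_{n,\rho,q}^{(k)}(x)=\sum_{l=0}^{n}\sum_{m=0}^{n}\frac{(-1)^{n}}{m!}\rho^{n-l}S_1\!\left(n,m,-\tfrac{x}{\rho}\right)S_1\!\left(m,l,\tfrac{y}{\rho}\right)B_{l,\rho,q}^{(k)}(y).$$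
   Context: For real $0\le q<1$ (with $0^0=1$), $[x]_q=\frac{1-q^x}{1-q}$. ${\rm Li}_{k,q}(w)=\sum_{m\ge1}w^m/[m]_q^k$. The $q$-poly-Bernoulli polynomials with parameter $\rho$: $\frac{\rho}{1-e^{-\rho t}}{\rm Li}_{k,q}\left(\frac{1-e^{-\rho t}}{\rho}\right)e^{-tz}=\sum_{n\ge0} B_{n,\rho,q}^{(k)}(z)\frac{t^n}{n!}$ (formal power series in $t$). Jackson's $q$-integral: $\int_0^1 f(x)\,d_qx=(1-q)\sum_{j\ge0} f(q^j)q^j$; multiple integrals are iterated. $(x)_n=x(x-1)\cdots(x-n+1)$, $(x)_0=1$. The $q$-poly-Cauchy polynomials of the first and second kind with parameter $\rho$ are $c_{n,\rho,q}^{(k)}(z)=\rho^n\int_0^1\cdots\int_0^1\left(\frac{x_1\cdots x_k-z}{\rho}\right)_n d_qx_1\cdots d_qx_k$ and $\widehat c_{n,\rho,q}^{(k)}(z)=\rho^n\int_0^1\cdots\int_0^1\left(\frac{-x_1\cdots x_k+z}{\rho}\right)_n d_qx_1\cdots d_qx_k$ ($k$-fold). Weighted Stirling numbers (Carlitz): $\frac{(1-t)^{-x}(-\ln(1-t))^m}{m!}=\sum_{n\ge0}S_1(n,m,x)\frac{t^n}{n!}$ and $\frac{e^{xt}(e^t-1)^m}{m!}=\sum_{n\ge0}S_2(n,m,x)\frac{t^n}{n!}$; both vanish when $n<m$. *)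

theory Defs
  imports "HOL-Analysis.Analysis" "HOL-Computational_Algebra.Formal_Power_Series"
begin

definition qnum :: "real \<Rightarrow> nat \<Rightarrow> real" where
  "qnum q m = (1 - q ^ m) / (1 - q)"

definition falling :: "complex \<Rightarrow> nat \<Rightarrow> complex" where
  "falling x n = (\<Prod>i<n. x - of_nat i)"

definition jackson_int :: "real \<Rightarrow> (real \<Rightarrow> complex) \<Rightarrow> complex" where
  "jackson_int q f = complex_of_real (1 - q) * (\<Sum>j. f (q ^ j) * complex_of_real (q ^ j))"

text \<open>k-fold iterated Jackson integral of F(x_1 * ... * x_k):
  multi_jackson q k F = int_0^1 d_q x_1 (int ... int F(x_1 * (x_2 ... x_k))).\<close>
fun multi_jackson :: "real \<Rightarrow> nat \<Rightarrow> (real \<Rightarrow> complex) \<Rightarrow> complex" where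
  "multi_jackson q 0 F = F 1"
| "multi_jackson q (Suc k) F = jackson_int q (\<lambda>x. multi_jackson q k (\<lambda>p. F (x * p)))"

definition qpoly_cauchy :: "nat \<Rightarrow> nat \<Rightarrow> real \<Rightarrow> real \<Rightarrow> complex \<Rightarrow> complex" where
  "qpoly_cauchy k n \<rho> q z = complex_of_real \<rho> ^ n *
     multi_jackson q k (\<lambda>p. falling ((complex_of_real p - z) / complex_of_real \<rho>) n)"

definition qpoly_cauchy_hat :: "nat \<Rightarrow> nat \<Rightarrow> real \<Rightarrow> real \<Rightarrow> complex \<Rightarrow> complex" where
  "qpoly_cauchy_hat k n \<rho> q z = complex_of_real \<rho> ^ n *
     multi_jackson q k (\<lambda>p. falling ((- complex_of_real p + z) / complex_of_real \<rho>) n)"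

text \<open>With W = (1 - e^{-\<rho> t})/\<rho> (zero constant term), we have
  \<rho>/(1-e^{-\<rho> t}) Li_{k,q}(W) = Li_{k,q}(W)/W = sum_{m>=1} W^(m-1)/[m]_q^k,
  i.e. the composition of the series L(w) = sum_{m>=0} w^m/[m+1]_q^k with W.\<close>
definition qW :: "real \<Rightarrow> complex fps" where
  "qW \<rho> = fps_const (1 / complex_of_real \<rho>) * (1 - fps_exp (- complex_of_real \<rho>))"

definition Li_div :: "nat \<Rightarrow> real \<Rightarrow> complex fps" where
  "Li_div k q = Abs_fps (\<lambda>m. 1 / complex_of_real (qnum q (Suc m) ^ k))"

definition qpoly_bernoulli :: "nat \<Rightarrow> nat \<Rightarrow> real \<Rightarrow> real \<Rightarrow> complex \<Rightarrow> complex" where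
  "qpoly_bernoulli k n \<rho> q z =
     fact n * fps_nth ((Li_div k q oo qW \<rho>) * fps_exp (- z)) n"

definition S2w :: "nat \<Rightarrow> nat \<Rightarrow> complex \<Rightarrow> complex" where
  "S2w n m x = fact n * fps_nth (fps_const (1 / fact m) * fps_exp x * (fps_exp 1 - 1) ^ m) n"

definition S1w :: "nat \<Rightarrow> nat \<Rightarrow> complex \<Rightarrow> complex" where
  "S1w n m x = fact n * fps_nth (fps_const (1 / fact m) * (fps_binomial (- x) oo (- fps_X)) *
       (- (fps_ln 1 oo (- fps_X))) ^ m) n"

end

theory Submission
  imports Defs
begin
unbundle no vec_syntax
notation fps_nth (infixl "$" 75)



lemma pow_nth_zero:
  fixes G H :: "complex fps"
  assumes "G$ 0 = 0" "n < m"
  shows "(H * G^m)$ n = 0"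
proof -
  have "1 \<le> subdegree G \<or> G = 0" using assms(1)
    by (metis One_nat_def Suc_le_eq gr0I subdegree_eq_0_iff)
  then have G: "G = fps_shift 1 G * fps_X"
    using fps_shift_times_fps_X[of G] by auto
  have "H * G^m = (H * fps_shift 1 G ^ m) * fps_X ^ m"
    by (subst G) (simp add: power_mult_distrib mult.assoc)
  then show ?thesis using assms(2) by (simp only:) (simp add: fps_X_power_mult_right_nth)
qed

lemma aux_const: fixes H K :: "complex fps" shows "(H * (fps_const c * K))$ n = c * (H*K)$ n"
proof -
  have "H * (fps_const c * K) = fps_const c * (H * K)" by (rule mult.left_commute)
  then show ?thesis by (simp only: fps_mult_left_const_nth)
qed

lemma compose_coeff:
  fixes F G H :: "complex fps"
  assumes "G$ 0 = 0" "n \<le> N"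
  shows "(H * (F oo G))$ n = (\<Sum>m=0..N. F$ m * (H * G^m)$ n)"
proof -
  define P where "P = (\<Sum>m=0..N. fps_const (F$ m) * G^m)"
  have eq: "(F oo G)$ i = P$ i" if "i \<le> N" for i
  proof -
    have "P$ i = (\<Sum>m=0..N. F$ m * (G^m)$ i)" by (simp add: P_def fps_sum_nth)
    also have "\<dots> = (\<Sum>m=0..i. F$ m * (G^m)$ i)"
    proof (rule sum.mono_neutral_right)
      show "\<forall>m\<in>{0..N} - {0..i}. F $ m * (G ^ m) $ i = 0"
        using pow_nth_zero[OF assms(1), of i _ 1] by auto
    qed (use that in auto)
    finally show ?thesis by (simp add: fps_compose_nth)
  qed
  have "(H * (F oo G))$ n = (H * P)$ n"
    unfolding fps_mult_nth using assms(2) eq by (intro sum.cong) auto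
  also have "\<dots> = (\<Sum>m=0..N. F$ m * (H * G^m)$ n)"
    by (simp add: P_def sum_distrib_left fps_sum_nth aux_const)
  finally show ?thesis .
qed

lemma binomial_exp_ln: "fps_binomial (c::complex) = fps_exp c oo fps_ln 1"
proof -
  let ?g = "fps_exp c oo fps_ln 1"
  have "fps_deriv ?g = fps_const c * ?g * inverse (1 + fps_X)"
    by (simp add: fps_compose_deriv fps_ln_deriv fps_compose_mult_distrib)
  also have "\<dots> = fps_const c * ?g / (1 + fps_X)"
    by (simp add: fps_divide_unit)
  finally have "fps_deriv ?g = fps_const c * ?g / (1 + fps_X)" .
  moreover have "?g $ 0 = 1" by simp
  ultimately show ?thesis using fps_binomial_ODE_unique'[of ?g c] by simp
qed

lemma exp_scale:
  fixes F :: "complex fps"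
  assumes "F$ 0 = 0"
  shows "fps_exp (c*d) oo F = fps_exp c oo (fps_const d * F)"
proof -
  have "fps_exp c oo (fps_const d * fps_X) = fps_exp (c*d)"
    by (subst fps_exp_compose_linear) (simp add: mult.commute)
  then have "fps_exp (c*d) oo F = (fps_exp c oo (fps_const d * fps_X)) oo F"
    by (simp add: mult.commute)
  also have "\<dots> = fps_exp c oo ((fps_const d * fps_X) oo F)"
    by (rule fps_compose_assoc[symmetric]) (use assms in simp_all)
  also have "(fps_const d * fps_X) oo F = fps_const d * F"
    using assms by (simp add: fps_compose_mult_distrib)
  finally show ?thesis .
qed

definition Eg :: "complex \<Rightarrow> complex fps" where
  "Eg s = fps_const (1/s) * (fps_exp s - 1)"
definition Lg :: "complex \<Rightarrow> complex fps" where
  "Lg s = fps_const (1/s) * (fps_ln 1 oo (fps_const s * fps_X))"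

lemma Eg0[simp]: "Eg s $ 0 = 0" by (simp add: Eg_def)
lemma Lg0[simp]: "Lg s $ 0 = 0" by (simp add: Lg_def)

lemma ln_exp: "fps_ln (1::complex) oo (fps_exp 1 - 1) = fps_X"
  using fps_inv_fps_exp_compose(1)[of "1::complex"] fps_ln_fps_exp_inv[of "1::complex"] by simp

lemma exp_ln: "(fps_exp (1::complex) - 1) oo fps_ln 1 = fps_X"
  using fps_inv_fps_exp_compose(2)[of "1::complex"] fps_ln_fps_exp_inv[of "1::complex"] by simp

lemma Lg_Eg:
  assumes "s \<noteq> 0" shows "Lg s oo Eg s = fps_X"
proof -
  have "(fps_const s * fps_X) oo Eg s = fps_exp s - 1"
    using assms by (simp add: fps_compose_mult_distrib Eg_def mult.assoc[symmetric] flip: fps_const_mult)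
  have e: "fps_exp s - 1 = (fps_exp 1 - 1) oo (fps_const s * fps_X)"
    by (simp add: fps_compose_sub_distrib)
  have "Lg s oo Eg s = fps_const (1/s) * ((fps_ln 1 oo (fps_const s * fps_X)) oo Eg s)"
    by (simp add: Lg_def fps_compose_mult_distrib)
  also have "(fps_ln 1 oo (fps_const s * fps_X)) oo Eg s = fps_ln 1 oo ((fps_const s * fps_X) oo Eg s)"
    by (rule fps_compose_assoc[symmetric]) simp_all
  also have "\<dots> = fps_ln 1 oo ((fps_exp 1 - 1) oo (fps_const s * fps_X))"
    using \<open>(fps_const s * fps_X) oo Eg s = fps_exp s - 1\<close> e by simp
  also have "\<dots> = fps_const s * fps_X"
    by (subst fps_compose_assoc) (simp_all add: ln_exp)
  finally show ?thesis using assms by (simp flip: fps_const_mult mult.assoc)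
qed

lemma Eg_Lg:
  assumes "s \<noteq> 0" shows "Eg s oo Lg s = fps_X"
proof -
  have e: "fps_exp s - 1 = (fps_exp 1 - 1) oo (fps_const s * fps_X)"
    by (simp add: fps_compose_sub_distrib)
  have "(fps_const s * fps_X) oo Lg s = fps_ln 1 oo (fps_const s * fps_X)"
    using assms by (simp add: fps_compose_mult_distrib Lg_def mult.assoc[symmetric] flip: fps_const_mult)
  have "Eg s oo Lg s = fps_const (1/s) * ((fps_exp s - 1) oo Lg s)"
    by (simp add: Eg_def fps_compose_mult_distrib)
  also have "(fps_exp s - 1) oo Lg s = (fps_exp 1 - 1) oo ((fps_const s * fps_X) oo Lg s)"
    by (subst e, rule fps_compose_assoc[symmetric]) simp_all
  also have "\<dots> = ((fps_exp 1 - 1) oo fps_ln 1) oo (fps_const s * fps_X)"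
    using \<open>(fps_const s * fps_X) oo Lg s = _\<close> by (simp add: fps_compose_assoc)
  also have "\<dots> = fps_const s * fps_X" by (simp add: exp_ln)
  finally show ?thesis using assms by (simp flip: fps_const_mult mult.assoc)
qed




definition aq :: "nat \<Rightarrow> real \<Rightarrow> nat \<Rightarrow> complex" where
  "aq k q j = 1 / complex_of_real (qnum q (Suc j) ^ k)"

lemma qpow_lt: assumes "0 \<le> (q::real)" "q < 1" shows "q ^ Suc j < 1"
proof -
  have "q * q ^ j \<le> q" using assms by (intro mult_left_le power_le_one) auto
  then show ?thesis using assms by simp
qed

lemma aq_Suc:
  assumes "0 \<le> q" "q < 1"
  shows "complex_of_real (1 - q) / (1 - complex_of_real (q ^ Suc j)) * aq k q j = aq (Suc k) q j"
proof -
  have "q ^ Suc j < 1" using assms by (rule qpow_lt)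
  then have n0: "1 - q ^ Suc j \<noteq> 0" by simp
  have n1: "1 - q \<noteq> 0" using assms by simp
  have "complex_of_real (1 - q) / (1 - complex_of_real (q ^ Suc j)) = 1 / complex_of_real (qnum q (Suc j))"
  proof -
    have e: "1 - complex_of_real (q ^ Suc j) = complex_of_real (1 - q ^ Suc j)" by simp
    show ?thesis unfolding qnum_def by (simp only: e of_real_divide) simp
  qed
  then show ?thesis unfolding aq_def by (simp add: of_real_mult)
qed

lemma MJ:
  assumes q: "0 \<le> q" "q < 1"
  shows "(\<And>p. F p = (\<Sum>j=0..N. c j * complex_of_real p ^ j)) \<Longrightarrow>
         multi_jackson q k F = (\<Sum>j=0..N. c j * aq k q j)"
proof (induction k arbitrary: F c)
  case 0
  then show ?case by (simp add: aq_def)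
next
  case (Suc k)
  have inner: "multi_jackson q k (\<lambda>p. F (x * p)) = (\<Sum>j=0..N. (c j * complex_of_real x ^ j) * aq k q j)" for x
    by (rule Suc.IH) (simp add: Suc.prems power_mult_distrib mult.assoc)
  have geo: "norm (complex_of_real (q ^ Suc j)) < 1" for j
    using q qpow_lt[OF q, of j] by (simp only: norm_of_real abs_of_nonneg zero_le_power)
  have trm: "(\<Sum>j=0..N. (c j * complex_of_real (q^i) ^ j) * aq k q j) * complex_of_real (q^i)
      = (\<Sum>j=0..N. (c j * aq k q j) * complex_of_real (q ^ Suc j) ^ i)" for i
    by (simp add: sum_distrib_left sum_distrib_right power_mult[symmetric] power_mult_distrib power_add mult_ac flip: power_Suc)
  have summ: "summable (\<lambda>i. (c j * aq k q j) * complex_of_real (q ^ Suc j) ^ i)" for j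
    using geo by (intro summable_mult summable_geometric)
  have "multi_jackson q (Suc k) F = complex_of_real (1 - q) *
      (\<Sum>i. (\<Sum>j=0..N. (c j * aq k q j) * complex_of_real (q ^ Suc j) ^ i))"
    by (simp add: jackson_int_def inner trm del: of_real_power)
  also have "(\<Sum>i. (\<Sum>j=0..N. (c j * aq k q j) * complex_of_real (q ^ Suc j) ^ i))
      = (\<Sum>j=0..N. (\<Sum>i. (c j * aq k q j) * complex_of_real (q ^ Suc j) ^ i))"
    by (rule suminf_sum) (rule summ)
  also have "\<dots> = (\<Sum>j=0..N. (c j * aq k q j) / (1 - complex_of_real (q ^ Suc j)))"
    using geo by (simp add: suminf_mult suminf_geometric summable_geometric divide_inverse del: of_real_power)
  finally show ?case
    by (simp add: sum_distrib_left aq_Suc[OF q, symmetric] mult_ac del: of_real_power of_real_diff)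
qed




definition AEq :: "nat \<Rightarrow> real \<Rightarrow> complex fps" where
  "AEq k q = Abs_fps (\<lambda>j. aq k q j / fact j)"

lemma bin_lin:
  assumes "s \<noteq> 0"
  shows "fps_binomial c oo (fps_const s * fps_X) = fps_exp (c * s) oo Lg s"
proof -
  have "fps_binomial c oo (fps_const s * fps_X) = fps_exp c oo (fps_ln 1 oo (fps_const s * fps_X))"
    unfolding binomial_exp_ln by (rule fps_compose_assoc[symmetric]) simp_all
  also have "fps_ln 1 oo (fps_const s * fps_X) = fps_const s * Lg s"
    using assms by (simp add: Lg_def mult.assoc[symmetric] flip: fps_const_mult)
  also have "fps_exp c oo (fps_const s * Lg s) = fps_exp (c * s) oo Lg s"
    by (rule exp_scale[symmetric]) simp
  finally show ?thesis .
qed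

lemma falling_coeff:
  assumes "s \<noteq> 0"
  shows "falling w n = fact n / s^n * (fps_exp (w * s) oo Lg s) $ n"
proof -
  have "(fps_binomial w oo (fps_const s * fps_X)) $ n = s^n * (w gchoose n)" by simp
  then have "(fps_exp (w * s) oo Lg s) $ n = s^n * (w gchoose n)" using bin_lin[OF assms] by simp
  moreover have "w gchoose n = falling w n / fact n"
    by (simp add: gbinomial_prod_rev falling_def atLeast0LessThan)
  ultimately show ?thesis using assms by simp
qed

lemma exp_split:
  fixes G :: "complex fps"
  assumes "G $ 0 = 0"
  shows "(fps_exp (p - z) oo G) $ n = (\<Sum>j=0..n. ((fps_exp (-z) oo G) * G^j) $ n / fact j * p ^ j)"
proof -
  have "fps_exp (p - z) = fps_exp (-z) * fps_exp p"
    by (simp flip: fps_exp_add_mult)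
  then have "fps_exp (p - z) oo G = (fps_exp (-z) oo G) * (fps_exp p oo G)"
    using assms by (simp add: fps_compose_mult_distrib)
  then show ?thesis
    using compose_coeff[OF assms order.refl, of "fps_exp (-z) oo G" "fps_exp p"]
    by (simp add: mult_ac)
qed

lemma AEq_coeff:
  fixes G :: "complex fps"
  assumes "G $ 0 = 0"
  shows "(H * (AEq k q oo G)) $ n = (\<Sum>j=0..n. (H * G^j) $ n / fact j * aq k q j)"
  using compose_coeff[OF assms order.refl, of H "AEq k q"] by (simp add: AEq_def mult_ac)

lemma cauchy_repr:
  assumes q: "0 \<le> q" "q < 1" and r: "\<rho> \<noteq> 0"
  shows "qpoly_cauchy k n \<rho> q z =
    fact n * ((fps_exp (-z) oo Lg (complex_of_real \<rho>)) * (AEq k q oo Lg (complex_of_real \<rho>))) $ n"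
proof -
  define r where "r = complex_of_real \<rho>"
  have r0: "r \<noteq> 0" using r by (simp add: r_def)
  define d where "d j = fact n / r^n * (((fps_exp (-z) oo Lg r) * Lg r ^ j) $ n / fact j)" for j
  have "falling ((complex_of_real p - z) / r) n = (\<Sum>j=0..n. d j * complex_of_real p ^ j)" for p
  proof -
    have "falling ((complex_of_real p - z) / r) n = fact n / r^n * (fps_exp (complex_of_real p - z) oo Lg r) $ n"
      using falling_coeff[OF r0, of "(complex_of_real p - z) / r" n] r0 by simp
    also have "\<dots> = (\<Sum>j=0..n. d j * complex_of_real p ^ j)"
      by (simp add: exp_split d_def sum_distrib_left mult_ac)
    finally show ?thesis .
  qed
  then have "multi_jackson q k (\<lambda>p. falling ((complex_of_real p - z) / r) n) = (\<Sum>j=0..n. d j * aq k q j)"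
    by (rule MJ[OF q])
  moreover have "((fps_exp (-z) oo Lg r) * (AEq k q oo Lg r)) $ n = (\<Sum>j=0..n. ((fps_exp (-z) oo Lg r) * (Lg r)^j) $ n / fact j * aq k q j)"
    by (rule AEq_coeff) simp
  ultimately show ?thesis
    unfolding qpoly_cauchy_def r_def[symmetric]
    using r0 by (simp add: d_def sum_distrib_left mult_ac)
qed

lemma cauchy_hat_repr:
  assumes q: "0 \<le> q" "q < 1" and r: "\<rho> \<noteq> 0"
  shows "qpoly_cauchy_hat k n \<rho> q z =
    fact n * ((fps_exp (-z) oo - Lg (complex_of_real \<rho>)) * (AEq k q oo - Lg (complex_of_real \<rho>))) $ n"
proof -
  define r where "r = complex_of_real \<rho>"
  have r0: "r \<noteq> 0" using r by (simp add: r_def)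
  define d where "d j = fact n / r^n * (((fps_exp (-z) oo - Lg r) * (- Lg r) ^ j) $ n / fact j)" for j
  have "falling ((- complex_of_real p + z) / r) n = (\<Sum>j=0..n. d j * complex_of_real p ^ j)" for p
  proof -
    have "falling ((- complex_of_real p + z) / r) n = fact n / r^n * (fps_exp (- complex_of_real p + z) oo Lg r) $ n"
      using falling_coeff[OF r0, of "(- complex_of_real p + z) / r" n] r0 by simp
    also have "fps_exp (- complex_of_real p + z) oo Lg r = fps_exp (complex_of_real p - z) oo (fps_const (-1) * Lg r)"
      using exp_scale[of "Lg r" "complex_of_real p - z" "-1"] by simp
    also have "fps_const (-1) * Lg r = - Lg r" by (simp add: fps_eq_iff)
    also have "fact n / r^n * (fps_exp (complex_of_real p - z) oo - Lg r) $ n = (\<Sum>j=0..n. d j * complex_of_real p ^ j)"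
      by (simp add: exp_split d_def sum_distrib_left mult_ac)
    finally show ?thesis .
  qed
  then have "multi_jackson q k (\<lambda>p. falling ((- complex_of_real p + z) / r) n) = (\<Sum>j=0..n. d j * aq k q j)"
    by (rule MJ[OF q])
  moreover have "((fps_exp (-z) oo - Lg r) * (AEq k q oo - Lg r)) $ n = (\<Sum>j=0..n. ((fps_exp (-z) oo - Lg r) * (- Lg r)^j) $ n / fact j * aq k q j)"
    by (rule AEq_coeff) simp
  ultimately show ?thesis
    unfolding qpoly_cauchy_hat_def r_def[symmetric]
    using r0 by (simp add: d_def sum_distrib_left mult_ac)
qed




lemma S2_scale:
  assumes s: "s \<noteq> 0"
  shows "((Eg s)^l * fps_exp w) $ m = s^m / s^l * S2w m l (w / s) * fact l / fact m"
proof -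
  have c1: "(fps_exp 1 - 1) oo (fps_const s * fps_X) = fps_exp s - 1"
    by (simp add: fps_compose_sub_distrib)
  have c2: "fps_exp (w / s) oo (fps_const s * fps_X) = fps_exp w"
    using s by simp
  have "((fps_exp 1 - 1)^l * fps_exp (w / s)) oo (fps_const s * fps_X) = (fps_exp s - 1)^l * fps_exp w"
    by (simp add: fps_compose_mult_distrib fps_compose_power[symmetric] c1 c2 del: fps_exp_compose_linear)
  then have e: "((fps_exp s - 1)^l * fps_exp w) $ m = s^m * ((fps_exp 1 - 1)^l * fps_exp (w / s)) $ m"
    by (metis fps_nth_compose_linear)
  have "(Eg s)^l * fps_exp w = fps_const ((1/s)^l) * ((fps_exp s - 1)^l * fps_exp w)"
    by (simp add: Eg_def power_mult_distrib fps_const_power mult.assoc)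
  then have h1: "((Eg s)^l * fps_exp w) $ m = (1/s)^l * s^m * ((fps_exp 1 - 1)^l * fps_exp (w / s)) $ m"
    using e by (simp add: mult.assoc)
  have h2: "((fps_exp 1 - 1)^l * fps_exp (w / s)) $ m = fact l / fact m * S2w m l (w / s)"
    by (simp add: S2w_def mult.assoc mult.commute[of "fps_exp (w / s)"])
  show ?thesis unfolding h1 h2 using s by (simp add: field_simps)
qed

lemma S2_vanish:
  assumes "m < l" shows "S2w m l w = 0"
proof -
  have "(fps_const (1 / fact l) * fps_exp w * (fps_exp 1 - 1) ^ l) $ m = 0"
    by (rule pow_nth_zero) (use assms in simp_all)
  then show ?thesis by (simp add: S2w_def)
qed

lemma alg1:
  fixes a b d e R X S :: complex
  assumes "b \<noteq> 0" "a * X = b * R" "X = d / e * S"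
  shows "R = a / b * S * d / e"
proof -
  have "R = a * X / b" using assms(1,2) by (simp add: field_simps)
  then show ?thesis using assms(3) by (simp add: mult_ac)
qed

lemma S1_scale:
  assumes s: "s \<noteq> 0"
  shows "((fps_exp (-x) oo Lg s) * (Lg s)^m) $ n = (-s)^n / (-s)^m * S1w n m (x / s) * fact m / fact n"
proof -
  define P where "P = fps_binomial (- (x / s)) oo (- fps_X)"
  define Q where "Q = - (fps_ln 1 oo (- fps_X :: complex fps))"
  have Q0: "Q $ 0 = 0" by (simp add: Q_def)
  have lin0: "(fps_const (-s) * fps_X) $ 0 = 0" by simp
  have mx: "(- fps_X :: complex fps) oo (fps_const (-s) * fps_X) = fps_const s * fps_X"
    by (simp add: fps_compose_uminus fps_eq_iff)
  have P1: "P oo (fps_const (-s) * fps_X) = fps_exp (-x) oo Lg s"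
  proof -
    have "P oo (fps_const (-s) * fps_X) = fps_binomial (- (x / s)) oo ((- fps_X) oo (fps_const (-s) * fps_X))"
      unfolding P_def by (rule fps_compose_assoc[symmetric]) simp_all
    also have "\<dots> = fps_exp (- (x / s) * s) oo Lg s" by (simp only: mx bin_lin[OF s])
    finally show ?thesis using s by simp
  qed
  have Q1: "Q oo (fps_const (-s) * fps_X) = fps_const (-s) * Lg s"
  proof -
    have "Q oo (fps_const (-s) * fps_X) = - ((fps_ln 1 oo (- fps_X)) oo (fps_const (-s) * fps_X))"
      unfolding Q_def by (rule fps_compose_uminus)
    also have "(fps_ln 1 oo (- fps_X)) oo (fps_const (-s) * fps_X) = fps_ln 1 oo ((- fps_X) oo (fps_const (-s) * fps_X))"
      by (rule fps_compose_assoc[symmetric]) simp_all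
    also have "\<dots> = fps_ln 1 oo (fps_const s * fps_X)" by (simp only: mx)
    also have "fps_ln 1 oo (fps_const s * fps_X) = fps_const s * Lg s"
      using s by (simp add: Lg_def mult.assoc[symmetric] flip: fps_const_mult)
    finally show ?thesis by (metis fps_const_neg mult_minus_left)
  qed
  have "(P * Q^m) oo (fps_const (-s) * fps_X) = (fps_exp (-x) oo Lg s) * (fps_const ((-s)^m) * (Lg s)^m)"
    by (simp add: fps_compose_mult_distrib fps_compose_power[symmetric] P1 Q1 power_mult_distrib fps_const_power)
  then have h1: "(-s)^n * (P * Q^m) $ n = (-s)^m * ((fps_exp (-x) oo Lg s) * (Lg s)^m) $ n"
    by (metis aux_const fps_nth_compose_linear)
  have h2: "(P * Q^m) $ n = fact m / fact n * S1w n m (x / s)"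
    by (simp add: S1w_def P_def Q_def mult.assoc)
  show ?thesis by (rule alg1[OF _ h1 h2]) (simp add: s)
qed

lemma S1_vanish:
  assumes "n < m" shows "S1w n m w = 0"
proof -
  have "(fps_const (1 / fact m) * (fps_binomial (- w) oo (- fps_X)) * (- (fps_ln 1 oo (- fps_X))) ^ m) $ n = 0"
    by (rule pow_nth_zero) (use assms in simp_all)
  then show ?thesis by (simp add: S1w_def)
qed




lemma qW_Eg: "qW \<rho> = Eg (- complex_of_real \<rho>)"
  by (simp add: qW_def Eg_def fps_eq_iff)

lemma Li_aq: "Li_div k q = Abs_fps (aq k q)"
  by (simp only: Li_div_def aq_def[abs_def])

lemma exp_inv: "fps_exp (y::complex) * fps_exp (-y) = 1"
  by (simp flip: fps_exp_add_mult)

lemma bern_repr: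
  assumes r: "\<rho> \<noteq> 0"
  shows "qpoly_bernoulli k n \<rho> q x = (\<Sum>m=0..n. aq k q m * ((- complex_of_real \<rho>)^n / (- complex_of_real \<rho>)^m *
      S2w n m (x / complex_of_real \<rho>) * fact m))"
proof -
  define r where "r = complex_of_real \<rho>"
  have r0: "- r \<noteq> 0" using r by (simp add: r_def)
  have "((Li_div k q oo qW \<rho>) * fps_exp (-x)) $ n = (fps_exp (-x) * (Li_div k q oo Eg (-r))) $ n"
    by (simp add: qW_Eg r_def mult.commute)
  also have "\<dots> = (\<Sum>m=0..n. aq k q m * (fps_exp (-x) * (Eg (-r))^m) $ n)"
    by (subst compose_coeff[of _ _ n]) (simp_all add: Li_aq)
  also have "\<dots> = (\<Sum>m=0..n. aq k q m * ((-r)^n / (-r)^m * S2w n m (x / r) * fact m / fact n))"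
    by (intro sum.cong refl) (simp add: mult.commute[of "fps_exp _"] S2_scale[OF r0])
  finally show ?thesis
    unfolding qpoly_bernoulli_def r_def[symmetric] by (simp add: sum_distrib_left)
qed

lemma inv_generic:
  fixes G K :: "complex fps"
  assumes G0: "G $ 0 = 0" and K0: "K $ 0 = 0" and GK: "G oo K = fps_X" and mN: "m \<le> N"
  shows "aq k q m / fact m = (\<Sum>l=0..N. ((fps_exp (-y) oo G) * (AEq k q oo G)) $ l * (fps_exp y * K^l) $ m)"
proof -
  have c: "F oo G oo K = F" for F
    using fps_compose_assoc[OF K0 G0, of F] GK by simp
  have "((fps_exp (-y) oo G) * (AEq k q oo G)) oo K = fps_exp (-y) * AEq k q"
    using K0 by (simp add: fps_compose_mult_distrib c)
  then have "AEq k q = fps_exp y * (((fps_exp (-y) oo G) * (AEq k q oo G)) oo K)"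
    by (simp add: mult.assoc[symmetric] exp_inv)
  then have "AEq k q $ m = (fps_exp y * (((fps_exp (-y) oo G) * (AEq k q oo G)) oo K)) $ m" by simp
  also have "\<dots> = (\<Sum>l=0..N. ((fps_exp (-y) oo G) * (AEq k q oo G)) $ l * (fps_exp y * K^l) $ m)"
    by (rule compose_coeff[OF K0 mN])
  finally show ?thesis by (simp add: AEq_def)
qed

lemma ainv_c:
  assumes q: "0 \<le> q" "q < 1" and r: "\<rho> \<noteq> 0" and mN: "m \<le> N"
  shows "aq k q m = (\<Sum>l=0..N. qpoly_cauchy k l \<rho> q y * (complex_of_real \<rho>^m / complex_of_real \<rho>^l *
     S2w m l (y / complex_of_real \<rho>)))"
proof -
  define r where "r = complex_of_real \<rho>"
  have r0: "r \<noteq> 0" using r by (simp add: r_def)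
  have "aq k q m / fact m = (\<Sum>l=0..N. ((fps_exp (-y) oo Lg r) * (AEq k q oo Lg r)) $ l * (fps_exp y * (Eg r)^l) $ m)"
    by (rule inv_generic[OF _ _ Lg_Eg[OF r0] mN]) simp_all
  also have "\<dots> = (\<Sum>l=0..N. qpoly_cauchy k l \<rho> q y / fact l * (r^m / r^l * S2w m l (y / r) * fact l / fact m))"
    by (intro sum.cong refl)
       (simp add: cauchy_repr[OF q r] r_def mult.commute[of "fps_exp _"] S2_scale[OF r0[unfolded r_def]])
  finally have h: "aq k q m / fact m = (\<Sum>l=0..N. qpoly_cauchy k l \<rho> q y / fact l * (r^m / r^l * S2w m l (y / r) * fact l / fact m))" .
  have "aq k q m = fact m * (aq k q m / fact m)" by simp
  also have "\<dots> = (\<Sum>l=0..N. fact m * (qpoly_cauchy k l \<rho> q y / fact l * (r^m / r^l * S2w m l (y / r) * fact l / fact m)))"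
    unfolding h sum_distrib_left ..
  also have "\<dots> = (\<Sum>l=0..N. qpoly_cauchy k l \<rho> q y * (r^m / r^l * S2w m l (y / r)))"
    by (intro sum.cong refl) simp
  finally show ?thesis unfolding r_def .
qed

lemma neg_pow: "(- (L::complex fps))^j = fps_const ((-1)^j) * L^j"
proof -
  have "- L = fps_const (-1) * L" by (simp add: fps_eq_iff)
  then show ?thesis by (simp add: power_mult_distrib fps_const_power)
qed

lemma ainv_chat:
  assumes q: "0 \<le> q" "q < 1" and r: "\<rho> \<noteq> 0" and mN: "m \<le> N"
  shows "aq k q m = (\<Sum>l=0..N. qpoly_cauchy_hat k l \<rho> q y * ((-1)^m * (complex_of_real \<rho>^m / complex_of_real \<rho>^l *
     S2w m l (- y / complex_of_real \<rho>))))"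
proof -
  define r where "r = complex_of_real \<rho>"
  have r0: "r \<noteq> 0" using r by (simp add: r_def)
  define K where "K = Eg r oo (- fps_X)"
  have K0: "K $ 0 = 0" by (simp add: K_def)
  have GK: "(- Lg r) oo K = fps_X"
  proof -
    have "(- Lg r) oo K = - ((Lg r oo Eg r) oo (- fps_X))"
      unfolding K_def fps_compose_uminus by (subst fps_compose_assoc) simp_all
    also have "\<dots> = fps_X" using r0 by (simp add: Lg_Eg fps_X_fps_compose_startby0)
    finally show ?thesis .
  qed
  have cK: "(fps_exp y * K^l) $ m = (-1)^m * (r^m / r^l * S2w m l (- y / r) * fact l / fact m)" for l
  proof -
    have "fps_exp y * K^l = (Eg r ^ l * fps_exp (-y)) oo (- fps_X)"
      unfolding K_def by (simp add: fps_compose_mult_distrib fps_compose_power mult.commute)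
    then have "(fps_exp y * K^l) $ m = (-1)^m * (Eg r ^ l * fps_exp (-y)) $ m"
      by (simp add: fps_compose_uminus')
    then show ?thesis by (simp add: S2_scale[OF r0])
  qed
  have "aq k q m / fact m = (\<Sum>l=0..N. ((fps_exp (-y) oo - Lg r) * (AEq k q oo - Lg r)) $ l * (fps_exp y * K^l) $ m)"
    by (rule inv_generic[OF _ K0 GK mN]) simp
  also have "\<dots> = (\<Sum>l=0..N. qpoly_cauchy_hat k l \<rho> q y / fact l * ((-1)^m * (r^m / r^l * S2w m l (- y / r) * fact l / fact m)))"
    by (intro sum.cong refl) (simp only: cK cauchy_hat_repr[OF q r] r_def, simp)
  finally have h: "aq k q m / fact m = (\<Sum>l=0..N. qpoly_cauchy_hat k l \<rho> q y / fact l * ((-1)^m * (r^m / r^l * S2w m l (- y / r) * fact l / fact m)))" .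
  have "aq k q m = fact m * (aq k q m / fact m)" by simp
  also have "\<dots> = (\<Sum>l=0..N. fact m * (qpoly_cauchy_hat k l \<rho> q y / fact l * ((-1)^m * (r^m / r^l * S2w m l (- y / r) * fact l / fact m))))"
    unfolding h sum_distrib_left ..
  also have "\<dots> = (\<Sum>l=0..N. qpoly_cauchy_hat k l \<rho> q y * ((-1)^m * (r^m / r^l * S2w m l (- y / r))))"
    by (intro sum.cong refl) simp
  finally show ?thesis unfolding r_def .
qed

lemma ainv_B:
  assumes r: "\<rho> \<noteq> 0" and mN: "m \<le> N"
  shows "aq k q m = (\<Sum>l=0..N. qpoly_bernoulli k l \<rho> q y / fact m * (complex_of_real \<rho>^m / complex_of_real \<rho>^l *
     S1w m l (y / complex_of_real \<rho>)))"
proof -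
  define r where "r = complex_of_real \<rho>"
  have r0: "- r \<noteq> 0" using r by (simp add: r_def)
  define T where "T = Lg (- r)"
  define Bg where "Bg = (Li_div k q oo Eg (- r)) * fps_exp (-y)"
  have T0: "T $ 0 = 0" by (simp add: T_def)
  have WT: "Eg (- r) oo T = fps_X" unfolding T_def by (rule Eg_Lg[OF r0])
  have "Bg oo T = Li_div k q * (fps_exp (-y) oo T)"
    unfolding Bg_def using T0 WT
    by (simp add: fps_compose_mult_distrib fps_compose_assoc[OF T0, symmetric])
  then have "(fps_exp y oo T) * (Bg oo T) = Li_div k q * ((fps_exp y * fps_exp (-y)) oo T)"
    using T0 by (simp add: fps_compose_mult_distrib mult_ac)
  then have L: "Li_div k q = (fps_exp y oo T) * (Bg oo T)" by (simp add: exp_inv)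
  have sc: "((fps_exp y oo T) * T^l) $ m = r^m / r^l * S1w m l (y / r) * fact l / fact m" for l
    using S1_scale[OF r0, of "-y" l m] by (simp add: T_def)
  have "aq k q m = Li_div k q $ m" by (simp add: Li_aq)
  also have "\<dots> = (\<Sum>l=0..N. Bg $ l * ((fps_exp y oo T) * T^l) $ m)"
    by (subst L) (rule compose_coeff[OF T0 mN])
  also have "\<dots> = (\<Sum>l=0..N. qpoly_bernoulli k l \<rho> q y / fact l * (r^m / r^l * S1w m l (y / r) * fact l / fact m))"
    by (intro sum.cong refl) (simp add: sc qpoly_bernoulli_def Bg_def qW_Eg r_def)
  also have "\<dots> = (\<Sum>l=0..N. qpoly_bernoulli k l \<rho> q y / fact m * (r^m / r^l * S1w m l (y / r)))"
    by (intro sum.cong refl) simp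
  finally show ?thesis unfolding r_def .
qed

lemma cfwd:
  assumes q: "0 \<le> q" "q < 1" and r: "\<rho> \<noteq> 0"
  shows "qpoly_cauchy k n \<rho> q x = (\<Sum>m=0..n. aq k q m * ((- complex_of_real \<rho>)^n / (- complex_of_real \<rho>)^m *
      S1w n m (x / complex_of_real \<rho>)))"
proof -
  define r where "r = complex_of_real \<rho>"
  have r0: "r \<noteq> 0" using r by (simp add: r_def)
  have "((fps_exp (-x) oo Lg r) * (AEq k q oo Lg r)) $ n = (\<Sum>j=0..n. ((fps_exp (-x) oo Lg r) * (Lg r)^j) $ n / fact j * aq k q j)"
    by (rule AEq_coeff) simp
  also have "\<dots> = (\<Sum>j=0..n. ((-r)^n / (-r)^j * S1w n j (x / r) * fact j / fact n) / fact j * aq k q j)"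
    by (intro sum.cong refl) (simp only: S1_scale[OF r0])
  finally show ?thesis
    unfolding cauchy_repr[OF q r] r_def[symmetric] by (simp add: sum_distrib_left mult_ac)
qed

lemma chatfwd:
  assumes q: "0 \<le> q" "q < 1" and r: "\<rho> \<noteq> 0"
  shows "qpoly_cauchy_hat k n \<rho> q x = (\<Sum>m=0..n. aq k q m * ((-1)^m * ((- complex_of_real \<rho>)^n / (- complex_of_real \<rho>)^m *
      S1w n m (- x / complex_of_real \<rho>))))"
proof -
  define r where "r = complex_of_real \<rho>"
  have r0: "r \<noteq> 0" using r by (simp add: r_def)
  have e: "fps_exp (-x) oo - Lg r = fps_exp (- (-x)) oo Lg r"
  proof -
    have "fps_exp (-x * (-1)) oo Lg r = fps_exp (-x) oo (fps_const (-1) * Lg r)"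
      by (rule exp_scale) simp
    moreover have "fps_const (-1) * Lg r = - Lg r" by (simp add: fps_eq_iff)
    ultimately show ?thesis by simp
  qed
  have "((fps_exp (-x) oo - Lg r) * (AEq k q oo - Lg r)) $ n = (\<Sum>j=0..n. ((fps_exp (-x) oo - Lg r) * (- Lg r)^j) $ n / fact j * aq k q j)"
    by (rule AEq_coeff) simp
  also have "\<dots> = (\<Sum>j=0..n. ((-1)^j * ((-r)^n / (-r)^j * S1w n j (- x / r) * fact j / fact n)) / fact j * aq k q j)"
  proof (intro sum.cong refl)
    fix j
    have "((fps_exp (-x) oo - Lg r) * (- Lg r)^j) $ n = (-1)^j * ((fps_exp (- (-x)) oo Lg r) * (Lg r)^j) $ n"
      unfolding e neg_pow by (simp only: aux_const)
    also have "\<dots> = (-1)^j * ((-r)^n / (-r)^j * S1w n j (- x / r) * fact j / fact n)"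
      by (simp only: S1_scale[OF r0])
    finally show "((fps_exp (-x) oo - Lg r) * (- Lg r)^j) $ n / fact j * aq k q j
       = ((-1)^j * ((-r)^n / (-r)^j * S1w n j (- x / r) * fact j / fact n)) / fact j * aq k q j" by simp
  qed
  finally show ?thesis
    unfolding cauchy_hat_repr[OF q r] r_def[symmetric] by (simp add: sum_distrib_left mult_ac)
qed




lemma pw:
  fixes r :: complex
  assumes "r \<noteq> 0" "m \<le> n" "l \<le> n"
  shows "r^m / r^l * ((-r)^n / (-r)^m) = (-1)^(n-m) * r^(n-l)"
proof -
  have "(-r)^n / (-r)^m = (-r)^(n-m)" using assms by (simp add: power_diff)
  also have "\<dots> = (-1)^(n-m) * r^(n-m)" by (rule power_minus)
  finally have a: "(-r)^n / (-r)^m = (-1)^(n-m) * r^(n-m)" .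
  have b: "r^m * r^(n-m) = r^n" using assms by (simp flip: power_add)
  have c: "r^n / r^l = r^(n-l)" using assms by (simp add: power_diff)
  have "r^m / r^l * ((-r)^n / (-r)^m) = (-1)^(n-m) * ((r^m * r^(n-m)) / r^l)"
    unfolding a by simp
  also have "\<dots> = (-1)^(n-m) * r^(n-l)" unfolding b c ..
  finally show ?thesis .
qed

lemma assemble:
  fixes X :: complex
  assumes "X = (\<Sum>m=0..n. A m * P m)"
    and "\<And>m. m \<le> n \<Longrightarrow> A m = (\<Sum>l=0..n. Q l m)"
    and "\<And>l m. l \<le> n \<Longrightarrow> m \<le> n \<Longrightarrow> Q l m * P m = R l m"
  shows "X = (\<Sum>l=0..n. \<Sum>m=0..n. R l m)"
proof -
  have "X = (\<Sum>m=0..n. \<Sum>l=0..n. Q l m * P m)"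
    using assms(1,2) by (simp add: sum_distrib_right)
  also have "\<dots> = (\<Sum>l=0..n. \<Sum>m=0..n. Q l m * P m)" by (rule sum.swap)
  also have "\<dots> = (\<Sum>l=0..n. \<Sum>m=0..n. R l m)" using assms(3) by simp
  finally show ?thesis .
qed




theorem theorem8:
  fixes n k :: nat and \<rho> q :: real and x y :: complex
  assumes "k \<ge> 1" and "\<rho> \<noteq> 0" and "0 \<le> q" and "q < 1"
  shows "(qpoly_bernoulli k n \<rho> q x =
           (\<Sum>l=0..n. \<Sum>m=0..n. (-1) ^ (n - m) * fact m * complex_of_real \<rho> ^ (n - l) *
              S2w n m (x / complex_of_real \<rho>) * S2w m l (y / complex_of_real \<rho>) *
              qpoly_cauchy k l \<rho> q y)) \<and>
         (qpoly_bernoulli k n \<rho> q x =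
           (\<Sum>l=0..n. \<Sum>m=0..n. (-1) ^ n * fact m * complex_of_real \<rho> ^ (n - l) *
              S2w n m (x / complex_of_real \<rho>) * S2w m l (- y / complex_of_real \<rho>) *
              qpoly_cauchy_hat k l \<rho> q y)) \<and>
         (qpoly_cauchy k n \<rho> q x =
           (\<Sum>l=0..n. \<Sum>m=0..n. (-1) ^ (n - m) / fact m * complex_of_real \<rho> ^ (n - l) *
              S1w n m (x / complex_of_real \<rho>) * S1w m l (y / complex_of_real \<rho>) *
              qpoly_bernoulli k l \<rho> q y)) \<and>
         (qpoly_cauchy_hat k n \<rho> q x =
           (\<Sum>l=0..n. \<Sum>m=0..n. (-1) ^ n / fact m * complex_of_real \<rho> ^ (n - l) *
              S1w n m (- x / complex_of_real \<rho>) * S1w m l (y / complex_of_real \<rho>) *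
              qpoly_bernoulli k l \<rho> q y))"
proof -
  note q = assms(3,4) and r = assms(2)
  define r where "r = complex_of_real \<rho>"
  have r0: "r \<noteq> 0" using r by (simp add: r_def)
  have sgn: "(-1::complex)^m * (-1)^(n-m) = (-1)^n" if "m \<le> n" for m
    using that by (simp flip: power_add)
  have I1: "qpoly_bernoulli k n \<rho> q x =
           (\<Sum>l=0..n. \<Sum>m=0..n. (-1) ^ (n - m) * fact m * r ^ (n - l) *
              S2w n m (x / r) * S2w m l (y / r) * qpoly_cauchy k l \<rho> q y)"
  proof (rule assemble[OF bern_repr[OF r, unfolded r_def[symmetric]]])
    fix m assume "m \<le> n"
    then show "aq k q m = (\<Sum>l=0..n. qpoly_cauchy k l \<rho> q y * (r^m / r^l * S2w m l (y / r)))"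
      unfolding r_def by (rule ainv_c[OF q r])
  next
    fix l m assume lm: "l \<le> n" "m \<le> n"
    have "qpoly_cauchy k l \<rho> q y * (r^m / r^l * S2w m l (y / r)) * ((-r)^n / (-r)^m * S2w n m (x / r) * fact m)
      = (r^m / r^l * ((-r)^n / (-r)^m)) * (fact m * S2w n m (x / r) * S2w m l (y / r) * qpoly_cauchy k l \<rho> q y)"
      by (simp add: mult_ac)
    also have "\<dots> = (-1) ^ (n - m) * fact m * r ^ (n - l) * S2w n m (x / r) * S2w m l (y / r) * qpoly_cauchy k l \<rho> q y"
      unfolding pw[OF r0 lm(2) lm(1)] by (simp add: mult_ac)
    finally show "qpoly_cauchy k l \<rho> q y * (r^m / r^l * S2w m l (y / r)) * ((-r)^n / (-r)^m * S2w n m (x / r) * fact m)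
      = (-1) ^ (n - m) * fact m * r ^ (n - l) * S2w n m (x / r) * S2w m l (y / r) * qpoly_cauchy k l \<rho> q y" .
  qed
  have I2: "qpoly_bernoulli k n \<rho> q x =
           (\<Sum>l=0..n. \<Sum>m=0..n. (-1) ^ n * fact m * r ^ (n - l) *
              S2w n m (x / r) * S2w m l (- y / r) * qpoly_cauchy_hat k l \<rho> q y)"
  proof (rule assemble[OF bern_repr[OF r, unfolded r_def[symmetric]]])
    fix m assume "m \<le> n"
    then show "aq k q m = (\<Sum>l=0..n. qpoly_cauchy_hat k l \<rho> q y * ((-1)^m * (r^m / r^l * S2w m l (- y / r))))"
      unfolding r_def by (rule ainv_chat[OF q r])
  next
    fix l m assume lm: "l \<le> n" "m \<le> n"
    have "qpoly_cauchy_hat k l \<rho> q y * ((-1)^m * (r^m / r^l * S2w m l (- y / r))) * ((-r)^n / (-r)^m * S2w n m (x / r) * fact m)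
      = (-1)^m * (r^m / r^l * ((-r)^n / (-r)^m)) * (fact m * S2w n m (x / r) * S2w m l (- y / r) * qpoly_cauchy_hat k l \<rho> q y)"
      by (simp add: mult_ac)
    also have "\<dots> = ((-1)^m * (-1) ^ (n - m)) * fact m * r ^ (n - l) * S2w n m (x / r) * S2w m l (- y / r) * qpoly_cauchy_hat k l \<rho> q y"
      unfolding pw[OF r0 lm(2) lm(1)] by (simp add: mult_ac)
    also have "\<dots> = (-1) ^ n * fact m * r ^ (n - l) * S2w n m (x / r) * S2w m l (- y / r) * qpoly_cauchy_hat k l \<rho> q y"
      unfolding sgn[OF lm(2)] ..
    finally show "qpoly_cauchy_hat k l \<rho> q y * ((-1)^m * (r^m / r^l * S2w m l (- y / r))) * ((-r)^n / (-r)^m * S2w n m (x / r) * fact m)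
      = (-1) ^ n * fact m * r ^ (n - l) * S2w n m (x / r) * S2w m l (- y / r) * qpoly_cauchy_hat k l \<rho> q y" .
  qed
  have I3: "qpoly_cauchy k n \<rho> q x =
           (\<Sum>l=0..n. \<Sum>m=0..n. (-1) ^ (n - m) / fact m * r ^ (n - l) *
              S1w n m (x / r) * S1w m l (y / r) * qpoly_bernoulli k l \<rho> q y)"
  proof (rule assemble[OF cfwd[OF q r, unfolded r_def[symmetric]]])
    fix m assume "m \<le> n"
    then show "aq k q m = (\<Sum>l=0..n. qpoly_bernoulli k l \<rho> q y / fact m * (r^m / r^l * S1w m l (y / r)))"
      unfolding r_def by (rule ainv_B[OF r])
  next
    fix l m assume lm: "l \<le> n" "m \<le> n"
    have "qpoly_bernoulli k l \<rho> q y / fact m * (r^m / r^l * S1w m l (y / r)) * ((-r)^n / (-r)^m * S1w n m (x / r))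
      = (r^m / r^l * ((-r)^n / (-r)^m)) * (S1w n m (x / r) * S1w m l (y / r) * qpoly_bernoulli k l \<rho> q y) / fact m"
      by (simp add: mult_ac)
    also have "\<dots> = (-1) ^ (n - m) / fact m * r ^ (n - l) * S1w n m (x / r) * S1w m l (y / r) * qpoly_bernoulli k l \<rho> q y"
      unfolding pw[OF r0 lm(2) lm(1)] by (simp add: mult_ac)
    finally show "qpoly_bernoulli k l \<rho> q y / fact m * (r^m / r^l * S1w m l (y / r)) * ((-r)^n / (-r)^m * S1w n m (x / r))
      = (-1) ^ (n - m) / fact m * r ^ (n - l) * S1w n m (x / r) * S1w m l (y / r) * qpoly_bernoulli k l \<rho> q y" .
  qed
  have I4: "qpoly_cauchy_hat k n \<rho> q x =
           (\<Sum>l=0..n. \<Sum>m=0..n. (-1) ^ n / fact m * r ^ (n - l) *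
              S1w n m (- x / r) * S1w m l (y / r) * qpoly_bernoulli k l \<rho> q y)"
  proof (rule assemble[OF chatfwd[OF q r, unfolded r_def[symmetric]]])
    fix m assume "m \<le> n"
    then show "aq k q m = (\<Sum>l=0..n. qpoly_bernoulli k l \<rho> q y / fact m * (r^m / r^l * S1w m l (y / r)))"
      unfolding r_def by (rule ainv_B[OF r])
  next
    fix l m assume lm: "l \<le> n" "m \<le> n"
    have "qpoly_bernoulli k l \<rho> q y / fact m * (r^m / r^l * S1w m l (y / r)) * ((-1)^m * ((-r)^n / (-r)^m * S1w n m (- x / r)))
      = (-1)^m * (r^m / r^l * ((-r)^n / (-r)^m)) * (S1w n m (- x / r) * S1w m l (y / r) * qpoly_bernoulli k l \<rho> q y) / fact m"
      by (simp add: mult_ac)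
    also have "\<dots> = ((-1)^m * (-1) ^ (n - m)) / fact m * r ^ (n - l) * S1w n m (- x / r) * S1w m l (y / r) * qpoly_bernoulli k l \<rho> q y"
      unfolding pw[OF r0 lm(2) lm(1)] by (simp add: mult_ac)
    also have "\<dots> = (-1) ^ n / fact m * r ^ (n - l) * S1w n m (- x / r) * S1w m l (y / r) * qpoly_bernoulli k l \<rho> q y"
      unfolding sgn[OF lm(2)] ..
    finally show "qpoly_bernoulli k l \<rho> q y / fact m * (r^m / r^l * S1w m l (y / r)) * ((-1)^m * ((-r)^n / (-r)^m * S1w n m (- x / r)))
      = (-1) ^ n / fact m * r ^ (n - l) * S1w n m (- x / r) * S1w m l (y / r) * qpoly_bernoulli k l \<rho> q y" .
  qed
  show ?thesis using I1 I2 I3 I4 unfolding r_def by blast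
qed


end
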